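(* Let $f:(0,\infty)\to(0,\infty)$ be continuous, let $F(x)=\int_x^1\frac{du}{f(u)}$ for $x>0$, and suppose $\lim_{x\to0^+}F(x)=+\infty$, so that the inverse $F^{-1}$ of the strictly decreasing function $F$ is defined for all large $t$. If $f\in\mathrm{RV}_0(\infty)$, i.e. \[ \lim_{x\to0^+}\frac{f(\lambda x)}{f(x)}=\begin{cases}+\infty,&\lambda>1,\\ 0,&\lambda<1,\end{cases} \] then $F^{-1}\in\mathrm{RV}_\infty(0)$.
   Context: $\mathrm{RV}_\infty(0)$ (slowly varying at infinity): measurable positive $h$ with $\lim_{t\to\infty}h(\lambda t)/h(t)=1$ for every $\lambda>0$. *)

theory Defs
  imports "HOL-Analysis.Analysis"
begin

definition Fint :: "(real \<Rightarrow> real) \<Rightarrow> real \<Rightarrow> real" where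
  "Fint f x = (if x \<le> 1 then integral {x..1} (\<lambda>u. 1 / f u)
               else - integral {1..x} (\<lambda>u. 1 / f u))"

text \<open>The inverse of F on (0,infinity): the unique x > 0 with F x = t (where it exists).\<close>
definition Finv :: "(real \<Rightarrow> real) \<Rightarrow> real \<Rightarrow> real" where
  "Finv f t = (THE x. 0 < x \<and> Fint f x = t)"

definition slowly_varying_at_top :: "(real \<Rightarrow> real) \<Rightarrow> bool" where
  "slowly_varying_at_top h \<longleftrightarrow>
     (\<exists>T. (\<forall>t\<ge>T. 0 < h t) \<and> set_borel_measurable borel {T..} h) \<and>
     (\<forall>c>0. ((\<lambda>t. h (c * t) / h t) \<longlongrightarrow> 1) at_top)"

end

theory Submission
  imports Defs
begin

lemma F_deriv:
  fixes f :: "real \<Rightarrow> real"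
  assumes cont: "continuous_on {0<..} f" and pos: "\<And>x. 0 < x \<Longrightarrow> 0 < f x"
    and y: "0 < y" "y < 1"
  shows "(Fint f has_real_derivative - (1 / f y)) (at y)"
proof -
  define g where "g = (\<lambda>u. 1 / f u)"
  define a where "a = y / 2"
  have a: "0 < a" "a < y" using y by (auto simp: a_def)
  have gc: "continuous_on {a..1} g" unfolding g_def
  proof (rule continuous_on_divide)
    show "continuous_on {a..1} f" by (rule continuous_on_subset[OF cont]) (use a in auto)
    show "\<forall>u\<in>{a..1}. f u \<noteq> 0" using pos a by (metis atLeastAtMost_iff less_le_trans less_numeral_extra(3))
  qed auto
  have gi: "g integrable_on {a..1}" using gc integrable_continuous_interval by blast
  have d: "((\<lambda>u. integral {a..u} g) has_real_derivative g y) (at y)"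
    using integral_has_real_derivative[OF gc, of y] a y by (simp add: at_within_Icc_at)
  have d2: "((\<lambda>u. integral {a..1} g - integral {a..u} g) has_real_derivative - g y) (at y)"
    using DERIV_diff[OF DERIV_const d] by simp
  show ?thesis
  proof (rule has_field_derivative_transform_within_open[OF _ open_greaterThanLessThan[of a 1]])
    show "((\<lambda>u. integral {a..1} g - integral {a..u} g) has_real_derivative - (1 / f y)) (at y)"
      using d2 by (simp add: g_def)
    show "y \<in> {a<..<1}" using a y by auto
    fix u assume u: "u \<in> {a<..<1}"
    have "integral {a..u} g + integral {u..1} g = integral {a..1} g"
      by (rule Henstock_Kurzweil_Integration.integral_combine) (use u gi in auto)
    then show "integral {a..1} g - integral {a..u} g = Fint f u"
      using u by (auto simp: Fint_def g_def)
  qed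
qed


context
  fixes f :: "real \<Rightarrow> real"
  assumes cont: "continuous_on {0<..} f" and pos: "\<And>x. 0 < x \<Longrightarrow> 0 < f x"
begin

lemma g_int: "0 < a \<Longrightarrow> (\<lambda>u. 1 / f u) integrable_on {a..b}"
proof -
  assume a: "0 < a"
  have "continuous_on {a..b} (\<lambda>u. 1 / f u)"
  proof (rule continuous_on_divide)
    show "continuous_on {a..b} f" by (rule continuous_on_subset[OF cont]) (use a in auto)
    show "\<forall>u\<in>{a..b}. f u \<noteq> 0" using pos a by (metis atLeastAtMost_iff less_le_trans less_numeral_extra(3))
  qed auto
  then show ?thesis using integrable_continuous_interval by blast
qed

lemma F_dec: "0 < x \<Longrightarrow> x < y \<Longrightarrow> y < 1 \<Longrightarrow> Fint f y < Fint f x"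
proof -
  assume a: "0 < x" "x < y" "y < 1"
  show ?thesis
  proof (rule DERIV_neg_imp_decreasing[OF a(2)])
    fix z assume "x \<le> z" "z \<le> y"
    then have z: "0 < z" "z < 1" using a by auto
    show "\<exists>d. (Fint f has_real_derivative d) (at z) \<and> d < 0"
      using F_deriv[OF cont pos z] pos[OF z(1)] by auto
  qed
qed

lemma F_isCont: "0 < x \<Longrightarrow> x < 1 \<Longrightarrow> isCont (Fint f) x"
  using F_deriv[OF cont pos] DERIV_isCont by blast

lemma F_nonneg: "0 < x \<Longrightarrow> x \<le> 1 \<Longrightarrow> 0 \<le> Fint f x"
proof -
  assume x: "0 < x" "x \<le> 1"
  have "0 \<le> integral {x..1} (\<lambda>u. 1 / f u)"
  proof (rule integral_nonneg)
    show "(\<lambda>u. 1 / f u) integrable_on {x..1}" using g_int x by auto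
    fix u assume "u \<in> {x..1}" then show "0 \<le> 1 / f u" using pos[of u] x by auto
  qed
  then show ?thesis using x by (simp add: Fint_def)
qed

lemma F_nonpos: "1 \<le> x \<Longrightarrow> Fint f x \<le> 0"
proof -
  assume x: "1 \<le> x"
  have "0 \<le> integral {1..x} (\<lambda>u. 1 / f u)"
  proof (rule integral_nonneg)
    show "(\<lambda>u. 1 / f u) integrable_on {1..x}" using g_int by auto
    fix u assume "u \<in> {1..x}" then show "0 \<le> 1 / f u" using pos[of u] by auto
  qed
  then show ?thesis using x by (auto simp: Fint_def)
qed

definition "TT = Fint f (1/2) + 1"

lemma F_le_half: "1/2 \<le> x \<Longrightarrow> Fint f x \<le> Fint f (1/2)"
proof -
  assume x: "1/2 \<le> x"
  show ?thesis
  proof (cases "x < 1")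
    case True
    then show ?thesis using x F_dec[of "1/2" x] by (cases "x = 1/2") (metis order_refl, simp)
  next
    case False
    then show ?thesis using F_nonpos[of x] F_nonneg[of "1/2"] by auto
  qed
qed

lemma F_inj: "0 < x \<Longrightarrow> x < 1 \<Longrightarrow> 0 < y \<Longrightarrow> y < 1 \<Longrightarrow> Fint f x = Fint f y \<Longrightarrow> x = y"
  using F_dec by (metis linorder_neqE_linordered_idom order_less_irrefl)

lemma Finv_props:
  assumes F_inf: "filterlim (Fint f) at_top (at_right 0)" and t: "TT \<le> t"
  shows "0 < Finv f t \<and> Finv f t < 1/2 \<and> Fint f (Finv f t) = t"
proof -
  have "eventually (\<lambda>x. t \<le> Fint f x) (at_right 0)"
    using F_inf by (simp add: filterlim_at_top)
  then obtain b where b: "b > 0" "\<And>x. 0 < x \<Longrightarrow> x < b \<Longrightarrow> t \<le> Fint f x"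
    unfolding eventually_at_right[OF zero_less_one[THEN less_trans, OF one_less_numeral_iff[THEN iffD2]]] 
    by (auto simp: eventually_at_right_field)
  define a where "a = min (b/2) (1/4)"
  have a: "0 < a" "a < b" "a < 1/2" using b by (auto simp: a_def)
  have Fa: "t \<le> Fint f a" using b a by auto
  have half: "Fint f (1/2) \<le> t" using t by (simp add: TT_def)
  have "continuous_on {a..1/2} (Fint f)"
    by (rule continuous_at_imp_continuous_on) (use a F_isCont in auto)
  then obtain x where x: "a \<le> x" "x \<le> 1/2" "Fint f x = t"
    using IVT2'[of "Fint f" "1/2" t a] Fa half a by auto
  have xh: "x < 1/2" using x t by (cases "x = 1/2") (auto simp: TT_def)
  have uniq: "y = x" if "0 < y" "Fint f y = t" for y
  proof -
    have "y < 1/2" using F_le_half[of y] that t by (force simp: TT_def)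
    then show ?thesis using F_inj[of y x] that x xh a by auto
  qed
  have "Finv f t = x" unfolding Finv_def
    by (rule the_equality) (use x a uniq in auto)
  then show ?thesis using x xh a by auto
qed


lemma Finv_anti:
  assumes F_inf: "filterlim (Fint f) at_top (at_right 0)" and st: "TT \<le> s" "s \<le> t"
  shows "Finv f t \<le> Finv f s"
proof (rule ccontr)
  assume "\<not> Finv f t \<le> Finv f s"
  then have lt: "Finv f s < Finv f t" by simp
  have ps: "0 < Finv f s \<and> Finv f s < 1/2 \<and> Fint f (Finv f s) = s" using Finv_props[OF F_inf st(1)] .
  have pt: "0 < Finv f t \<and> Finv f t < 1/2 \<and> Fint f (Finv f t) = t" using Finv_props[OF F_inf] st by auto
  have "Fint f (Finv f t) < Fint f (Finv f s)" using F_dec[of "Finv f s" "Finv f t"] ps pt lt by auto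
  then show False using ps pt st by auto
qed

lemma Finv_lim:
  assumes F_inf: "filterlim (Fint f) at_top (at_right 0)"
  shows "filterlim (Finv f) (at_right 0) at_top"
proof (rule tendsto_imp_filterlim_at_right)
  show "eventually (\<lambda>t. Finv f t > 0) at_top"
    using eventually_ge_at_top[of TT] by eventually_elim (use Finv_props[OF F_inf] in auto)
  show "(Finv f \<longlongrightarrow> 0) at_top"
  proof (rule order_tendstoI)
    fix a :: real assume a0: "a < 0"
    show "eventually (\<lambda>t. a < Finv f t) at_top"
      using eventually_ge_at_top[of TT] by eventually_elim (use Finv_props[OF F_inf] a0 in force)
  next
    fix b :: real assume b: "0 < b"
    define e where "e = min b (1/4)"
    have e: "0 < e" "e \<le> b" "e < 1/2" using b by (auto simp: e_def)
    show "eventually (\<lambda>t. Finv f t < b) at_top"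
      using eventually_ge_at_top[of "max TT (Fint f e + 1)"]
    proof eventually_elim
      case (elim t)
      then have p: "0 < Finv f t \<and> Finv f t < 1/2 \<and> Fint f (Finv f t) = t"
        using Finv_props[OF F_inf] by auto
      show ?case
      proof (rule ccontr)
        assume "\<not> Finv f t < b"
        then have "e \<le> Finv f t" using e by auto
        then have "Fint f (Finv f t) \<le> Fint f e"
          using F_dec[of e "Finv f t"] e p by (cases "e = Finv f t") auto
        then show False using p elim by auto
      qed
    qed
  qed
qed

lemma key:
  assumes F_inf: "filterlim (Fint f) at_top (at_right 0)"
    and rv_small: "\<And>c. 0 < c \<Longrightarrow> c < 1 \<Longrightarrow> ((\<lambda>x. f (c * x) / f x) \<longlongrightarrow> 0) (at_right 0)"
    and c: "0 < c" and l: "0 < l" "l < 1"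
  shows "eventually (\<lambda>x. c * Fint f x \<le> Fint f (l * x)) (at_right 0)"
proof -
  have "eventually (\<lambda>x. f (l * x) / f x < l / (c + 1)) (at_right 0)"
    using rv_small[OF l] c l by (auto intro: order_tendstoD)
  then obtain d where d: "d > 0" "\<And>x. 0 < x \<Longrightarrow> x < d \<Longrightarrow> f (l * x) / f x < l / (c + 1)"
    by (auto simp: eventually_at_right_field)
  define d' where "d' = min d (1/2)"
  have d': "0 < d'" "d' \<le> d" "d' < 1" using d by (auto simp: d'_def)
  define psi where "psi = (\<lambda>x. Fint f (l * x) - (c + 1) * Fint f x)"
  have der: "\<exists>D. (psi has_real_derivative D) (at y) \<and> D \<le> 0" if y: "0 < y" "y < d'" for y
  proof -
    have ly: "0 < l * y" using y l by simp
    have ly3: "l * y \<le> y" using mult_left_le_one_le[of y l] y l by simp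
    have ly2: "l * y < 1" using ly3 y d' by linarith
    have d1: "((\<lambda>x. Fint f (l * x)) has_real_derivative (- (1 / f (l * y))) * l) (at y)"
    proof -
      have dF: "(Fint f has_real_derivative - (1 / f (l * y))) (at (l * y))"
        using F_deriv[OF cont pos ly ly2] .
      have dl: "((\<lambda>x. l * x) has_real_derivative l) (at y)"
        by (auto intro!: derivative_eq_intros)
      show ?thesis using DERIV_chain2[where f="Fint f" and g="\<lambda>x. l*x", OF dF dl] by simp
    qed
    have d2: "(Fint f has_real_derivative - (1 / f y)) (at y)"
      using F_deriv[OF cont pos y(1)] y d' by auto
    have dpsi: "(psi has_real_derivative (- (1 / f (l * y))) * l - (c + 1) * (- (1 / f y))) (at y)"
      unfolding psi_def by (intro DERIV_diff d1 DERIV_cmult d2)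
    have fpos: "0 < f y" "0 < f (l * y)" using pos y ly by auto
    have "f (l * y) / f y < l / (c + 1)" using d y d' by auto
    then have "f (l * y) * (c + 1) < l * f y" using fpos c by (simp add: divide_simps)
    then have "(c + 1) / f y \<le> l / f (l * y)" using fpos c by (simp add: divide_simps mult.commute)
    then have "(- (1 / f (l * y))) * l - (c + 1) * (- (1 / f y)) \<le> 0" by simp
    then show ?thesis using dpsi by blast
  qed
  define M where "M = psi (d'/2)"
  have psiM: "M \<le> psi x" if x: "0 < x" "x \<le> d'/2" for x
    unfolding M_def
    by (rule DERIV_nonpos_imp_nonincreasing[OF x(2)]) (use der x d' in auto)
  have ev1: "eventually (\<lambda>x. \<bar>M\<bar> \<le> Fint f x) (at_right 0)"
    using F_inf by (simp add: filterlim_at_top)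
  have ev2: "eventually (\<lambda>x. 0 < x \<and> x < d'/2) (at_right 0)"
    using d' by (auto simp: eventually_at_right_field intro!: exI[of _ "d'/2"])
  show ?thesis using ev1 ev2
  proof eventually_elim
    case (elim x)
    then have "M \<le> psi x" using psiM by auto
    then show ?case using elim unfolding psi_def by (auto simp: algebra_simps)
  qed
qed

lemma ratio_ge1:
  assumes F_inf: "filterlim (Fint f) at_top (at_right 0)"
    and rv_small: "\<And>c. 0 < c \<Longrightarrow> c < 1 \<Longrightarrow> ((\<lambda>x. f (c * x) / f x) \<longlongrightarrow> 0) (at_right 0)"
    and c: "1 \<le> c"
  shows "((\<lambda>t. Finv f (c * t) / Finv f t) \<longlongrightarrow> 1) at_top"
proof (rule order_tendstoI)
  have evT: "eventually (\<lambda>t. TT \<le> t \<and> TT \<le> c * t) at_top"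
    using eventually_ge_at_top[of "max TT 0"]
  proof eventually_elim
    case (elim t)
    then have "t \<le> c * t" using c by (simp add: mult_le_cancel_right1)
    then show ?case using elim by auto
  qed
  fix a :: real assume a: "a < 1"
  define l where "l = (max a 0 + 1) / 2"
  have l: "0 < l" "l < 1" "a < l" using a by (auto simp: l_def)
  have ev: "eventually (\<lambda>t. c * Fint f (Finv f t) \<le> Fint f (l * Finv f t)) at_top"
  proof -
    have evk: "eventually (\<lambda>x. c * Fint f x \<le> Fint f (l*x)) (at_right 0)"
      by (rule key[OF F_inf rv_small]) (use c l in auto)
    show ?thesis by (rule eventually_compose_filterlim[OF evk Finv_lim[OF F_inf]])
  qed
  show "eventually (\<lambda>t. a < Finv f (c * t) / Finv f t) at_top" using ev evT
  proof eventually_elim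
    case (elim t)
    have px: "0 < Finv f t \<and> Finv f t < 1/2 \<and> Fint f (Finv f t) = t" using Finv_props[OF F_inf] elim by auto
    have py: "0 < Finv f (c*t) \<and> Finv f (c*t) < 1/2 \<and> Fint f (Finv f (c*t)) = c*t" using Finv_props[OF F_inf] elim by auto
    have lx1: "0 < l * Finv f t" using l px by simp
    have lx3: "l * Finv f t \<le> Finv f t" using mult_left_le_one_le[of "Finv f t" l] l px by simp
    have lx: "0 < l * Finv f t" "l * Finv f t < 1" using lx1 lx3 px by linarith+
    have "l * Finv f t \<le> Finv f (c*t)"
    proof (rule ccontr)
      assume "\<not> ?thesis"
      then have "Fint f (l * Finv f t) < Fint f (Finv f (c*t))" using F_dec[of "Finv f (c*t)" "l * Finv f t"] py lx by auto
      then show False using elim px py by auto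
    qed
    then have "l \<le> Finv f (c * t) / Finv f t" using px by (simp add: divide_simps)
    then show ?case using l by auto
  qed
next
  have evT: "eventually (\<lambda>t. TT \<le> t \<and> t \<le> c * t) at_top"
    using eventually_ge_at_top[of "max TT 0"]
    by eventually_elim (use c in \<open>auto simp: mult_le_cancel_right1\<close>)
  fix b :: real assume b: "1 < b"
  show "eventually (\<lambda>t. Finv f (c * t) / Finv f t < b) at_top" using evT
  proof eventually_elim
    case (elim t)
    have px: "0 < Finv f t" using Finv_props[OF F_inf] elim by auto
    have "Finv f (c * t) \<le> Finv f t" using Finv_anti[OF F_inf] elim by auto
    then have "Finv f (c * t) / Finv f t \<le> 1" using px by (simp add: divide_simps)
    then show ?case using b by auto
  qed
qed

end


theorem mainTheorem9:
  fixes f :: "real \<Rightarrow> real"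
  assumes cont: "continuous_on {0<..} f"
    and pos: "\<And>x. 0 < x \<Longrightarrow> 0 < f x"
    and F_inf: "filterlim (Fint f) at_top (at_right 0)"
    and rv_big: "\<And>c. c > 1 \<Longrightarrow> filterlim (\<lambda>x. f (c * x) / f x) at_top (at_right 0)"
    and rv_small: "\<And>c. 0 < c \<Longrightarrow> c < 1 \<Longrightarrow> ((\<lambda>x. f (c * x) / f x) \<longlongrightarrow> 0) (at_right 0)"
  shows "slowly_varying_at_top (Finv f)"
  unfolding slowly_varying_at_top_def
proof (intro conjI allI impI)
  define T where "T = TT f"
  note props = Finv_props[OF cont pos F_inf]
  define h where "h = (\<lambda>x. Finv f (max x T))"
  have "mono (\<lambda>x. - h x)"
  proof (rule monoI)
    fix x y :: real assume "x \<le> y"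
    then show "- h x \<le> - h y" unfolding h_def T_def
      using Finv_anti[OF cont pos F_inf, of "max x (TT f)" "max y (TT f)"] by auto
  qed
  then have "(\<lambda>x. - h x) \<in> borel_measurable borel" by (rule borel_measurable_mono)
  then have hm: "h \<in> borel_measurable borel"
    using borel_measurable_uminus[of "\<lambda>x. - h x"] by simp
  have eq: "(\<lambda>x. indicator {T..} x *\<^sub>R Finv f x) = (\<lambda>x. indicator {T..} x *\<^sub>R h x)"
    by (rule ext) (auto simp: h_def indicator_def max_def)
  have "(\<lambda>x. indicator {T..} x *\<^sub>R h x) \<in> borel_measurable borel"
    using hm by (intro borel_measurable_scaleR borel_measurable_indicator) auto
  then have "set_borel_measurable borel {T..} (Finv f)"
    unfolding set_borel_measurable_def eq .
  moreover have "\<forall>t\<ge>T. 0 < Finv f t" using props by (auto simp: T_def)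
  ultimately show "\<exists>T. (\<forall>t\<ge>T. 0 < Finv f t) \<and> set_borel_measurable borel {T..} (Finv f)" by blast
next
  fix c :: real assume c: "0 < c"
  show "((\<lambda>t. Finv f (c * t) / Finv f t) \<longlongrightarrow> 1) at_top"
  proof (cases "1 \<le> c")
    case True
    then show ?thesis using ratio_ge1[OF cont pos F_inf rv_small] by blast
  next
    case False
    then have c1: "1 \<le> 1 / c" using c by (simp add: divide_simps)
    have lim: "((\<lambda>u. Finv f ((1/c) * u) / Finv f u) \<longlongrightarrow> 1) at_top"
      using ratio_ge1[OF cont pos F_inf rv_small c1] .
    have ct: "filterlim (\<lambda>t. c * t) at_top at_top"
      by (rule filterlim_tendsto_pos_mult_at_top[OF tendsto_const c filterlim_ident])
    have "((\<lambda>t. Finv f ((1/c) * (c * t)) / Finv f (c * t)) \<longlongrightarrow> 1) at_top"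
      using filterlim_compose[OF lim ct] by (simp add: o_def)
    then have "((\<lambda>t. Finv f t / Finv f (c * t)) \<longlongrightarrow> 1) at_top" using c by simp
    then have "((\<lambda>t. inverse (Finv f t / Finv f (c * t))) \<longlongrightarrow> inverse 1) at_top"
      by (rule tendsto_inverse) simp
    then show ?thesis by simp
  qed
qed

end
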